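(* Let $K$ be an admissible kernel on $X\times Y$ with constant $C_K$ and let $\mu_0$ be a Borel probability measure on $Y$. The following are equivalent: (1) the function $U_K^{\mu_0}$ is constant on $X$; (2) $U_K^{\mu_0}(x)=C_K$ for every $x\in X$; (3) $\mu_0$ minimizes $\sup_{x\in X}U_K^{\mu}(x)$ over Borel probability measures $\mu$ on $Y$, i.e. $\inf_{\mu\in\mathcal{M}(Y)}\sup_{x\in X}U_K^\mu(x)=\sup_{x\in X}U_K^{\mu_0}(x)$.
   Context: $(X,d_X)$ and $(Y,d_Y)$ are compact metric spaces and $G$ is a compact topological group acting isometrically and transitively on both $X$ and $Y$. $\mathcal{M}(Y)$ is the set of Borel probability measures on $Y$; $m_X$ and $m_Y$ denote the unique $G$-invariant Radon (Borel) probability measures on $X$ and $Y$. A Borel measurable $K:X\times Y\to\mathbb{R}\cup\{-\infty\}$ is an admissible kernel if: (i) there is $B_K\in[0,\infty)$ with $-\infty\le K(x,y)\le B_K$ for all $x,y$; (ii) $\int_X|K(x,y)|\,dm_X(x)<\infty$ for every $y\in Y$; (iii) for every $y$, $K(\cdot,y)$ is upper semi-continuous; (iv) $K(g(x),y)=K(x,g^{-1}(y))$ for all $g\in G,x\in X,y\in Y$. The constant $C_K$ is the common value of $\int_X K(x,y)\,dm_X(x)$ (independent of $y$). For $\mu\in\mathcal{M}(Y)$, $U_K^\mu(x)=\int_Y K(x,y)\,d\mu(y)$. *)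

theory Defs
  imports "HOL-Probability.Probability" "HOL-Algebra.Group_Action"
begin

text \<open>Extended Lebesgue integral of an extended-real-valued function:
  positive part minus negative part (well defined for functions bounded above
  w.r.t. a finite measure, where the positive part is finite).\<close>
definition ext_integral :: "'a measure \<Rightarrow> ('a \<Rightarrow> ereal) \<Rightarrow> ereal" where
  "ext_integral M f =
     enn2ereal (\<integral>\<^sup>+ x. e2ennreal (f x) \<partial>M) - enn2ereal (\<integral>\<^sup>+ x. e2ennreal (- f x) \<partial>M)"

definition borel_prob_measures :: "'a::topological_space measure set" where
  "borel_prob_measures = {\<mu>. sets \<mu> = sets (borel :: 'a measure) \<and> prob_space \<mu>}"

definition potential :: "('x \<Rightarrow> 'y \<Rightarrow> ereal) \<Rightarrow> 'y measure \<Rightarrow> 'x \<Rightarrow> ereal" where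
  "potential K \<mu> x = ext_integral \<mu> (\<lambda>y. K x y)"

definition compact_topological_group :: "('g, 'b) monoid_scheme \<Rightarrow> 'g topology \<Rightarrow> bool" where
  "compact_topological_group G T \<longleftrightarrow>
     group G \<and> topspace T = carrier G \<and> compact_space T \<and> Hausdorff_space T \<and>
     continuous_map (prod_topology T T) T (\<lambda>(a, b). a \<otimes>\<^bsub>G\<^esub> b) \<and>
     continuous_map T T (\<lambda>a. inv\<^bsub>G\<^esub> a)"

definition isometric_transitive_action ::
    "('g, 'b) monoid_scheme \<Rightarrow> 'g topology \<Rightarrow> ('g \<Rightarrow> 'x::metric_space \<Rightarrow> 'x) \<Rightarrow> bool" where
  "isometric_transitive_action G T \<phi> \<longleftrightarrow>
     group_action G (UNIV :: 'x set) \<phi> \<and>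
     continuous_map (prod_topology T euclidean) euclidean (\<lambda>(g, x). \<phi> g x) \<and>
     (\<forall>g\<in>carrier G. \<forall>x x'. dist (\<phi> g x) (\<phi> g x') = dist x x') \<and>
     (\<forall>x x'. \<exists>g\<in>carrier G. \<phi> g x = x')"

definition invariant_prob_measure ::
    "('g, 'b) monoid_scheme \<Rightarrow> ('g \<Rightarrow> 'x::topological_space \<Rightarrow> 'x) \<Rightarrow> 'x measure \<Rightarrow> bool" where
  "invariant_prob_measure G \<phi> m \<longleftrightarrow>
     m \<in> borel_prob_measures \<and>
     (\<forall>g\<in>carrier G. \<forall>A\<in>sets m. emeasure m (\<phi> g -` A) = emeasure m A)"

definition admissible_kernel ::
    "('g, 'b) monoid_scheme \<Rightarrow> ('g \<Rightarrow> 'x::topological_space \<Rightarrow> 'x) \<Rightarrow> ('g \<Rightarrow> 'y::topological_space \<Rightarrow> 'y)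
      \<Rightarrow> 'x measure \<Rightarrow> ('x \<Rightarrow> 'y \<Rightarrow> ereal) \<Rightarrow> bool" where
  "admissible_kernel G \<phi> \<psi> mX K \<longleftrightarrow>
     (\<lambda>(x, y). K x y) \<in> borel_measurable (borel :: ('x \<times> 'y) measure) \<and>
     (\<exists>B::real. 0 \<le> B \<and> (\<forall>x y. K x y \<le> ereal B)) \<and>
     (\<forall>y. (\<integral>\<^sup>+ x. e2ennreal \<bar>K x y\<bar> \<partial>mX) < \<infinity>) \<and>
     (\<forall>y. \<forall>t::ereal. open {x. K x y < t}) \<and>
     (\<forall>g\<in>carrier G. \<forall>x y. K (\<phi> g x) y = K x (\<psi> (inv\<^bsub>G\<^esub> g) y))"

definition kernel_const :: "'x measure \<Rightarrow> ('x \<Rightarrow> 'y \<Rightarrow> ereal) \<Rightarrow> ereal" where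
  "kernel_const mX K = (THE c. \<forall>y. ext_integral mX (\<lambda>x. K x y) = c)"

end

theory Submission
  imports Defs
begin

lemma pw1:
  fixes z :: ereal assumes "z \<le> ereal B" "0 \<le> B"
  shows "e2ennreal (ereal B - max z 0) + e2ennreal z = ennreal B"
  using assms by (cases z) (auto simp: ennreal_plus[symmetric] max_def e2ennreal_neg ennreal_neg)

lemma pw2:
  fixes z :: ereal assumes "z \<le> ereal B" "0 \<le> B"
  shows "e2ennreal (ereal B - z) = e2ennreal (ereal B - max z 0) + e2ennreal (- z)"
  using assms by (cases z) (auto simp: ennreal_plus[symmetric] max_def e2ennreal_neg ennreal_neg)

lemma meas_e2: "g \<in> borel_measurable M \<Longrightarrow> (\<lambda>z. e2ennreal (g z)) \<in> borel_measurable M"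
  by (rule measurable_compose[OF _ measurable_e2ennreal])

lemma ext_repr:
  assumes M: "prob_space M" and f: "f \<in> borel_measurable M" and le: "\<And>z. f z \<le> ereal B" and B: "0 \<le> B"
  shows "ext_integral M f = ereal B - enn2ereal (\<integral>\<^sup>+ z. e2ennreal (ereal B - f z) \<partial>M)"
proof -
  interpret prob_space M by fact
  define a where "a = (\<integral>\<^sup>+ z. e2ennreal (ereal B - max (f z) 0) \<partial>M)"
  define p where "p = (\<integral>\<^sup>+ z. e2ennreal (f z) \<partial>M)"
  define n where "n = (\<integral>\<^sup>+ z. e2ennreal (- f z) \<partial>M)"
  have ma: "(\<lambda>z. e2ennreal (ereal B - max (f z) 0)) \<in> borel_measurable M" by (intro meas_e2 borel_measurable_ereal_diff borel_measurable_max f borel_measurable_const)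
  have mp: "(\<lambda>z. e2ennreal (f z)) \<in> borel_measurable M" using f by (intro meas_e2)
  have mn: "(\<lambda>z. e2ennreal (- f z)) \<in> borel_measurable M" by (intro meas_e2 borel_measurable_uminus_ereal f)
  have "a + p = (\<integral>\<^sup>+ z. e2ennreal (ereal B - max (f z) 0) + e2ennreal (f z) \<partial>M)"
    unfolding a_def p_def by (rule nn_integral_add[symmetric]) (use ma mp in auto)
  also have "\<dots> = (\<integral>\<^sup>+ z. ennreal B \<partial>M)" using pw1[OF le B] by simp
  also have "\<dots> = ennreal B" by (simp add: emeasure_space_1)
  finally have ap: "a + p = ennreal B" .
  have "(\<integral>\<^sup>+ z. e2ennreal (ereal B - f z) \<partial>M) = (\<integral>\<^sup>+ z. e2ennreal (ereal B - max (f z) 0) + e2ennreal (- f z) \<partial>M)"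
    using pw2[OF le B] by simp
  also have "\<dots> = a + n" unfolding a_def n_def by (rule nn_integral_add) (use ma mn in auto)
  finally have an: "(\<integral>\<^sup>+ z. e2ennreal (ereal B - f z) \<partial>M) = a + n" .
  have "a \<le> a + p" by simp
  then have "a \<le> ennreal B" using ap by simp
  then obtain ar where ar: "a = ennreal ar" "0 \<le> ar" by (cases a) (auto simp: top_unique)
  have "p \<le> a + p" by simp
  then have "p \<le> ennreal B" using ap by simp
  then obtain pr where pr: "p = ennreal pr" "0 \<le> pr" by (cases p) (auto simp: top_unique)
  have "ennreal (ar + pr) = ennreal B" using ap ar pr by (simp add: ennreal_plus)
  then have arpr: "ar + pr = B" by (rule iffD1[OF ennreal_inj[OF add_nonneg_nonneg[OF ar(2) pr(2)] B]])
  have e1: "enn2ereal (a + n) = ereal ar + enn2ereal n" using ar by (simp add: plus_ennreal.rep_eq)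
  have e2: "enn2ereal p = ereal pr" using pr by simp
  have "enn2ereal n \<ge> 0" by simp
  then show ?thesis unfolding ext_integral_def an p_def[symmetric] n_def[symmetric] e1 e2
    using arpr by (cases "enn2ereal n") auto
qed
lemma compact_countable_base:
  assumes "compact (UNIV :: 'a::metric_space set)"
  obtains \<B> :: "'a::metric_space set set" where "countable \<B>" "\<And>b. b \<in> \<B> \<Longrightarrow> open b"
    "\<And>U x. open U \<Longrightarrow> x \<in> U \<Longrightarrow> \<exists>b\<in>\<B>. x \<in> b \<and> b \<subseteq> U"
proof -
  have "\<exists>F. finite F \<and> UNIV \<subseteq> (\<Union>c\<in>F. ball (c::'a) (1 / Suc n))" for n :: nat
  proof -
    have cover: "UNIV \<subseteq> (\<Union>c\<in>UNIV. ball (c::'a) (1 / Suc n))" by auto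
    show ?thesis
    proof (rule compactE_image[OF assms _ cover])
      show "\<And>T. T \<in> UNIV \<Longrightarrow> open (ball T (1 / Suc n))" by simp
      fix C' :: "'a set" assume a: "C' \<subseteq> UNIV" "finite C'" "UNIV \<subseteq> (\<Union>c\<in>C'. ball c (1 / Suc n))"
      show ?thesis using a(2,3) by (rule exI[where x=C', OF conjI])
    qed
  qed
  then have "\<exists>F. \<forall>n. finite (F n) \<and> UNIV \<subseteq> (\<Union>c\<in>F n. ball (c::'a) (1 / Suc n))" by (intro choice allI)
  then obtain F :: "nat \<Rightarrow> 'a set" where F: "\<And>n. finite (F n)" "\<And>n. UNIV \<subseteq> (\<Union>c\<in>F n. ball c (1 / Suc n))"
    by blast
  define \<B> :: "'a set set" where "\<B> = (\<Union>n. (\<lambda>c. ball c (1 / Suc n)) ` F n)"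
  have "countable \<B>" unfolding \<B>_def by (intro countable_UN countable_image countableI_type) (simp add: countable_finite F(1))
  moreover have "\<And>b. b \<in> \<B> \<Longrightarrow> open b" unfolding \<B>_def by auto
  moreover have "\<exists>b\<in>\<B>. x \<in> b \<and> b \<subseteq> U" if U: "open U" "x \<in> U" for U x
  proof -
    have "\<exists>e>0. ball x e \<subseteq> U" using U by (simp add: open_contains_ball)
    then obtain e where e: "e > 0" "ball x e \<subseteq> U" by blast
    obtain n :: nat where n: "1 / Suc n < e / 2"
      using e(1) by (metis half_gt_zero_iff nat_approx_posE)
    obtain c :: 'a where c: "c \<in> F n" "x \<in> ball c (1 / Suc n)" using F(2)[of n] by blast
    have "ball c (1 / Suc n) \<subseteq> ball x e"
    proof
      fix z assume "z \<in> ball c (1 / Suc n)"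
      then have h: "dist c z < 1 / Suc n" "dist c x < 1 / Suc n" using c by (auto simp: dist_commute)
      have "dist x z \<le> dist x c + dist c z" by (rule dist_triangle)
      then have "dist x z < e" using h n by (simp add: dist_commute)
      then show "z \<in> ball x e" by simp
    qed
    then show ?thesis using c e unfolding \<B>_def by blast
  qed
  ultimately show ?thesis using that by blast
qed

lemma borel_prod_subset:
  assumes "compact (UNIV :: 'a::metric_space set)" "compact (UNIV :: 'b::metric_space set)"
  shows "sets (borel :: ('a \<times> 'b) measure) \<subseteq> sets (borel \<Otimes>\<^sub>M borel :: ('a \<times> 'b) measure)"
proof -
  obtain BA :: "'a set set" where A: "countable BA" "\<And>b. b \<in> BA \<Longrightarrow> open b"
    "\<And>U x. open U \<Longrightarrow> x \<in> U \<Longrightarrow> \<exists>b\<in>BA. x \<in> b \<and> b \<subseteq> U"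
    using compact_countable_base[OF assms(1)] by blast
  obtain BB :: "'b set set" where B: "countable BB" "\<And>b. b \<in> BB \<Longrightarrow> open b"
    "\<And>U x. open U \<Longrightarrow> x \<in> U \<Longrightarrow> \<exists>b\<in>BB. x \<in> b \<and> b \<subseteq> U"
    using compact_countable_base[OF assms(2)] by blast
  have opn: "W \<in> sets (borel \<Otimes>\<^sub>M borel)" if W: "open W" for W :: "('a \<times> 'b) set"
  proof -
    define I where "I = {p \<in> BA \<times> BB. fst p \<times> snd p \<subseteq> W}"
    have cI: "countable I" unfolding I_def using A(1) B(1)
      by (intro countable_subset[OF _ countable_SIGMA[of BA "\<lambda>_. BB"]]) auto
    have "W = (\<Union>p\<in>I. fst p \<times> snd p)"
    proof
      show "W \<subseteq> (\<Union>p\<in>I. fst p \<times> snd p)"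
      proof
        fix z assume "z \<in> W"
        then obtain U :: "'a set" and V :: "'b set" where UV: "open U" "open V" "z \<in> U \<times> V" "U \<times> V \<subseteq> W"
          using open_prod_elim[OF W \<open>z \<in> W\<close>] by metis
        obtain a :: "'a set" where a: "a \<in> BA" "fst z \<in> a" "a \<subseteq> U" using A(3)[OF UV(1), of "fst z"] UV(3) by (auto simp: mem_Times_iff)
        obtain b :: "'b set" where b: "b \<in> BB" "snd z \<in> b" "b \<subseteq> V" using B(3)[OF UV(2), of "snd z"] UV(3) by (auto simp: mem_Times_iff)
        have "(a, b) \<in> I" unfolding I_def using a b UV(4) by auto
        then show "z \<in> (\<Union>p\<in>I. fst p \<times> snd p)" using a b by (cases z) force
      qed
    qed (auto simp: I_def)
    also have "\<dots> \<in> sets (borel \<Otimes>\<^sub>M borel)"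
      using cI A(2) B(2) by (intro sets.countable_UN'') (auto simp: I_def intro!: pair_measureI)
    finally show ?thesis .
  qed
  show ?thesis unfolding sets_borel
    by (rule sets.sigma_sets_subset') (use opn in auto)
qed

lemma h_inj: "ereal B - enn2ereal a = ereal B - enn2ereal b \<Longrightarrow> a = b"
proof (cases a)
  case (real r)
  then show "ereal B - enn2ereal a = ereal B - enn2ereal b \<Longrightarrow> a = b"
    by (cases b) auto
next
  case top
  then show "ereal B - enn2ereal a = ereal B - enn2ereal b \<Longrightarrow> a = b"
    by (cases b) auto
qed

lemma h_mono: "a \<le> b \<Longrightarrow> ereal B - enn2ereal b \<le> ereal B - enn2ereal a"
  by (intro ereal_minus_mono) (auto simp: less_eq_ennreal.rep_eq)

lemma h_leB: "ereal B - enn2ereal e \<le> ereal B"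
  by (cases e) auto

lemma h_lt: "c \<le> B \<Longrightarrow> (ereal B - enn2ereal e < ereal c \<longleftrightarrow> ennreal (B - c) < e)"
  by (cases e) (auto simp: ennreal_less_iff)

lemma h_le: "s \<le> B \<Longrightarrow> ereal B - enn2ereal e \<le> ereal s \<Longrightarrow> ennreal (B - s) \<le> e"
  by (cases e) (auto intro!: ennreal_leI)

lemma h_up: "0 \<le> w \<Longrightarrow> ennreal w \<le> e \<Longrightarrow> ereal B - enn2ereal e \<le> ereal (B - w)"
  by (cases e) (auto simp: ennreal_le_iff2)

lemma h_fin: "q < \<infinity> \<Longrightarrow> \<exists>r. ereal B - enn2ereal q = ereal r"
  by (cases q) auto


locale setting =
  fixes G :: "('g, 'b) monoid_scheme" and \<phi> :: "'g \<Rightarrow> 'x::metric_space \<Rightarrow> 'x"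
    and \<psi> :: "'g \<Rightarrow> 'y::metric_space \<Rightarrow> 'y" and mX :: "'x measure"
    and K :: "'x \<Rightarrow> 'y \<Rightarrow> ereal" and B :: real
  assumes cX: "compact (UNIV :: 'x set)" and cY: "compact (UNIV :: 'y set)"
    and grp: "group G"
    and cphi: "\<And>g. g \<in> carrier G \<Longrightarrow> continuous_on UNIV (\<phi> g)"
    and cpsi: "\<And>g. g \<in> carrier G \<Longrightarrow> continuous_on UNIV (\<psi> g)"
    and tphi: "\<And>x x'. \<exists>g\<in>carrier G. \<phi> g x = x'"
    and tpsi: "\<And>y y'. \<exists>g\<in>carrier G. \<psi> g y = y'"
    and mXb: "mX \<in> borel_prob_measures"
    and minv: "\<And>g A. g \<in> carrier G \<Longrightarrow> A \<in> sets mX \<Longrightarrow> emeasure mX (\<phi> g -` A) = emeasure mX A"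
    and Kmeas: "(\<lambda>(x, y). K x y) \<in> borel_measurable borel"
    and B0: "0 \<le> B" and KB: "\<And>x y. K x y \<le> ereal B"
    and Kint: "\<And>y. (\<integral>\<^sup>+ x. e2ennreal \<bar>K x y\<bar> \<partial>mX) < \<infinity>"
    and usc: "\<And>y t. open {x. K x y < t}"
    and equiv: "\<And>g x y. g \<in> carrier G \<Longrightarrow> K (\<phi> g x) y = K x (\<psi> (inv\<^bsub>G\<^esub> g) y)"
begin

definition P where "P \<mu> x = (\<integral>\<^sup>+ y. e2ennreal (ereal B - K x y) \<partial>\<mu>)"
definition Q where "Q y = (\<integral>\<^sup>+ x. e2ennreal (ereal B - K x y) \<partial>mX)"
definition q where "q = Q undefined"

lemma mX_prob: "prob_space mX" and sets_mX: "sets mX = sets borel"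
  using mXb by (auto simp: borel_prob_measures_def)

lemma space_mX: "space mX = UNIV"
  using sets_eq_imp_space_eq[OF sets_mX] by simp

lemma bpm_D: "\<mu> \<in> borel_prob_measures \<Longrightarrow> prob_space \<mu> \<and> sets \<mu> = sets borel"
  by (auto simp: borel_prob_measures_def)

lemma Kx_meas: "K x \<in> borel_measurable borel"
proof -
  have "Pair x \<in> borel_measurable borel"
    by (rule borel_measurable_continuous_onI) (intro continuous_intros)
  from measurable_compose[OF this Kmeas] show ?thesis by simp
qed

lemma Ky_meas: "(\<lambda>x. K x y) \<in> borel_measurable borel"
proof -
  have "(\<lambda>x. (x, y)) \<in> borel_measurable borel"
    by (rule borel_measurable_continuous_onI) (intro continuous_intros)
  from measurable_compose[OF this Kmeas] show ?thesis by simp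
qed

lemma meas_cong: "sets M = sets borel \<Longrightarrow> f \<in> borel_measurable borel \<Longrightarrow> f \<in> borel_measurable M"
  using measurable_cong_sets[of M borel borel borel] by simp

lemma fx_meas: "(\<lambda>y. e2ennreal (ereal B - K x y)) \<in> borel_measurable borel"
  by (intro meas_e2 borel_measurable_ereal_diff borel_measurable_const Kx_meas)

lemma fy_meas: "(\<lambda>x. e2ennreal (ereal B - K x y)) \<in> borel_measurable borel"
  by (intro meas_e2 borel_measurable_ereal_diff borel_measurable_const Ky_meas)

lemma pot: "\<mu> \<in> borel_prob_measures \<Longrightarrow> potential K \<mu> x = ereal B - enn2ereal (P \<mu> x)"
proof -
  assume "\<mu> \<in> borel_prob_measures"
  then have h: "prob_space \<mu>" "sets \<mu> = sets borel" using bpm_D by auto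
  show ?thesis unfolding potential_def P_def
    by (rule ext_repr[OF h(1) meas_cong[OF h(2) Kx_meas] KB B0])
qed

lemma ext_Q: "ext_integral mX (\<lambda>x. K x y) = ereal B - enn2ereal (Q y)"
  unfolding Q_def by (rule ext_repr[OF mX_prob meas_cong[OF sets_mX Ky_meas] KB B0])

lemma pw_le: "e2ennreal (ereal B - z) \<le> ennreal B + e2ennreal \<bar>z\<bar>" if "z \<le> ereal B" for z
proof (cases z)
  case (real r)
  have e1: "e2ennreal (ereal B - z) = ennreal (B - r)" using real by simp
  have e2: "ennreal B + e2ennreal \<bar>z\<bar> = ennreal (B + \<bar>r\<bar>)" using real B0 by (simp add: ennreal_plus)
  show ?thesis unfolding e1 e2 by (rule ennreal_leI) simp
next
  case PInf
  then show ?thesis by simp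
next
  case MInf
  then have "e2ennreal \<bar>z\<bar> = \<top>" by simp
  then show ?thesis by simp
qed

lemma Qfin: "Q y < \<infinity>"
proof -
  interpret prob_space mX by (rule mX_prob)
  have m: "(\<lambda>x. e2ennreal \<bar>K x y\<bar>) \<in> borel_measurable mX"
    by (intro meas_e2 borel_measurable_ereal_abs meas_cong[OF sets_mX] Ky_meas)
  have "Q y \<le> (\<integral>\<^sup>+ x. ennreal B + e2ennreal \<bar>K x y\<bar> \<partial>mX)"
    unfolding Q_def by (intro nn_integral_mono pw_le KB)
  also have "\<dots> = ennreal B + (\<integral>\<^sup>+ x. e2ennreal \<bar>K x y\<bar> \<partial>mX)"
    using m by (subst nn_integral_add) (auto simp: emeasure_space_1)
  also have "\<dots> < \<infinity>" using Kint[of y] by (simp add: ennreal_add_less_top)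
  finally show ?thesis .
qed

lemma distr_mX: "g \<in> carrier G \<Longrightarrow> distr mX borel (\<phi> g) = mX"
proof -
  assume g: "g \<in> carrier G"
  have m: "\<phi> g \<in> measurable mX borel"
    by (intro meas_cong[OF sets_mX] borel_measurable_continuous_onI cphi g)
  show ?thesis
  proof (rule measure_eqI)
    show "sets (distr mX borel (\<phi> g)) = sets mX" using sets_mX by simp
    fix A assume "A \<in> sets (distr mX borel (\<phi> g))"
    then have A: "A \<in> sets borel" by simp
    have "emeasure (distr mX borel (\<phi> g)) A = emeasure mX (\<phi> g -` A \<inter> space mX)"
      by (rule emeasure_distr[OF m A])
    also have "\<dots> = emeasure mX A" using minv[OF g] A sets_mX space_mX by simp
    finally show "emeasure (distr mX borel (\<phi> g)) A = emeasure mX A" .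
  qed
qed

lemma Q_const: "Q y = Q y'"
proof -
  interpret group G by (rule grp)
  obtain g where g: "g \<in> carrier G" "\<psi> g y' = y" using tpsi by blast
  have ig: "inv\<^bsub>G\<^esub> g \<in> carrier G" using g by simp
  have K: "K x y = K (\<phi> (inv\<^bsub>G\<^esub> g) x) y'" for x
    using equiv[OF ig, of x y'] g by simp
  have m: "\<phi> (inv\<^bsub>G\<^esub> g) \<in> measurable mX borel"
    by (intro meas_cong[OF sets_mX] borel_measurable_continuous_onI cphi ig)
  have "Q y = (\<integral>\<^sup>+ x. e2ennreal (ereal B - K (\<phi> (inv\<^bsub>G\<^esub> g) x) y') \<partial>mX)"
    unfolding Q_def K ..
  also have "\<dots> = (\<integral>\<^sup>+ x. e2ennreal (ereal B - K x y') \<partial>distr mX borel (\<phi> (inv\<^bsub>G\<^esub> g)))"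
    by (rule nn_integral_distr[OF m meas_cong[OF sets_distr fy_meas], symmetric])
  also have "\<dots> = Q y'" unfolding Q_def distr_mX[OF ig] ..
  finally show ?thesis .
qed

lemma Q_q: "Q y = q" unfolding q_def by (rule Q_const)

lemma q_fin: "q < \<infinity>" using Qfin Q_q by metis

lemma kc: "kernel_const mX K = ereal B - enn2ereal q"
  unfolding kernel_const_def
  by (rule the_equality) (auto simp: ext_Q Q_q)


lemma prod_meas: "(\<lambda>(x, y). e2ennreal (ereal B - K x y)) \<in> borel_measurable (borel \<Otimes>\<^sub>M borel)"
proof -
  have m: "(\<lambda>p. e2ennreal (ereal B - (case p of (x, y) \<Rightarrow> K x y))) \<in> borel_measurable borel"
    by (intro meas_e2 borel_measurable_ereal_diff borel_measurable_const Kmeas)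
  have e: "(\<lambda>(x, y). e2ennreal (ereal B - K x y)) = (\<lambda>p. e2ennreal (ereal B - (case p of (x, y) \<Rightarrow> K x y)))"
    by (auto simp: fun_eq_iff)
  show ?thesis unfolding e
  proof (rule measurableI)
    fix A :: "ennreal set" assume "A \<in> sets borel"
    then have "(\<lambda>p. e2ennreal (ereal B - (case p of (x, y) \<Rightarrow> K x y))) -` A \<inter> space borel \<in> sets borel"
      using m by (rule measurable_sets[rotated])
    then show "(\<lambda>p. e2ennreal (ereal B - (case p of (x, y) \<Rightarrow> K x y))) -` A \<inter> space (borel \<Otimes>\<^sub>M borel) \<in> sets (borel \<Otimes>\<^sub>M borel)"
      using borel_prod_subset[OF cX cY] by (auto simp: space_pair_measure)
  qed simp
qed

lemma fubini:
  assumes \<mu>: "\<mu> \<in> borel_prob_measures"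
  shows "P \<mu> \<in> borel_measurable mX" "(\<integral>\<^sup>+ x. P \<mu> x \<partial>mX) = q"
proof -
  have h: "prob_space \<mu>" "sets \<mu> = sets borel" using bpm_D \<mu> by auto
  interpret pmu: prob_space \<mu> by (rule h(1))
  interpret pX: prob_space mX by (rule mX_prob)
  interpret pair_sigma_finite mX \<mu>
    by (intro pair_sigma_finite.intro prob_space_imp_sigma_finite h(1) mX_prob)
  have ms: "sets (mX \<Otimes>\<^sub>M \<mu>) = sets (borel \<Otimes>\<^sub>M borel)" by (rule sets_pair_measure_cong[OF sets_mX h(2)])
  have mf: "(\<lambda>(x, y). e2ennreal (ereal B - K x y)) \<in> borel_measurable (mX \<Otimes>\<^sub>M \<mu>)"
    by (subst measurable_cong_sets[OF ms refl]) (rule prod_meas)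
  have "P \<mu> = (\<lambda>x. \<integral>\<^sup>+ y. e2ennreal (ereal B - K x y) \<partial>\<mu>)" by (simp add: fun_eq_iff P_def)
  also have "\<dots> \<in> borel_measurable mX"
    by (rule pmu.borel_measurable_nn_integral[OF mf])
  finally show "P \<mu> \<in> borel_measurable mX" .
  have "(\<integral>\<^sup>+ y. (\<integral>\<^sup>+ x. e2ennreal (ereal B - K x y) \<partial>mX) \<partial>\<mu>) = (\<integral>\<^sup>+ x. (\<integral>\<^sup>+ y. e2ennreal (ereal B - K x y) \<partial>\<mu>) \<partial>mX)"
    by (rule Fubini'[OF mf])
  moreover have "(\<integral>\<^sup>+ y. (\<integral>\<^sup>+ x. e2ennreal (ereal B - K x y) \<partial>mX) \<partial>\<mu>) = q"
    using Q_q by (simp add: Q_def[symmetric] pmu.emeasure_space_1)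
  ultimately show "(\<integral>\<^sup>+ x. P \<mu> x \<partial>mX) = q" by (simp add: P_def)
qed

lemma ex_le_q:
  assumes \<mu>: "\<mu> \<in> borel_prob_measures"
  shows "\<exists>x. P \<mu> x \<le> q"
proof (rule ccontr)
  assume "\<not> (\<exists>x. P \<mu> x \<le> q)"
  then have lt: "\<And>x. q < P \<mu> x" by (simp add: not_le)
  interpret pX: prob_space mX by (rule mX_prob)
  have "(\<integral>\<^sup>+ x. q \<partial>mX) < (\<integral>\<^sup>+ x. P \<mu> x \<partial>mX)"
  proof (rule nn_integral_less)
    show "(\<lambda>x. q) \<in> borel_measurable mX" by simp
    show "P \<mu> \<in> borel_measurable mX" by (rule fubini(1)[OF \<mu>])
    show "(\<integral>\<^sup>+ x. q \<partial>mX) \<noteq> \<infinity>" using q_fin by (simp add: pX.emeasure_space_1)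
    show "AE x in mX. q \<le> P \<mu> x" using lt by (simp add: less_imp_le)
    show "\<not> (AE x in mX. P \<mu> x \<le> q)"
    proof
      assume a: "AE x in mX. P \<mu> x \<le> q"
      have "AE x in mX. False"
      proof (rule AE_mp[OF a AE_I2])
        fix x show "P \<mu> x \<le> q \<longrightarrow> False" using lt[of x] by (simp add: not_le)
      qed
      then show False by simp
    qed
  qed
  then show False using fubini(2)[OF \<mu>] by (simp add: pX.emeasure_space_1)
qed

lemma const_q:
  assumes \<mu>: "\<mu> \<in> borel_prob_measures" and c: "\<And>x. P \<mu> x = p"
  shows "p = q"
proof -
  interpret pX: prob_space mX by (rule mX_prob)
  have "(\<integral>\<^sup>+ x. P \<mu> x \<partial>mX) = p" using c by (simp add: pX.emeasure_space_1)
  then show ?thesis using fubini(2)[OF \<mu>] by simp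
qed


lemma lt_e2: "0 \<le> r \<Longrightarrow> ennreal r < e2ennreal z \<longleftrightarrow> ereal r < z"
proof (cases z)
  case (real s)
  assume r: "0 \<le> r"
  show ?thesis
  proof (cases "s \<le> 0")
    case True
    then have "e2ennreal z = 0" using real by (simp add: e2ennreal_neg ennreal_neg)
    then show ?thesis using real r True by simp
  next
    case False
    then show ?thesis using real r by (simp add: ennreal_less_iff)
  qed
qed (simp_all add: e2ennreal_neg)

lemma lt_minus: "ereal r < ereal B - z \<longleftrightarrow> z < ereal (B - r)"
  by (cases z) auto

lemma lsc: assumes \<mu>: "\<mu> \<in> borel_prob_measures" shows "open {x. t < P \<mu> x}"
proof -
  have h: "prob_space \<mu>" "sets \<mu> = sets borel" using bpm_D \<mu> by auto
  define f where "f x y = e2ennreal (ereal B - K x y)" for x y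
  have fm: "f x \<in> borel_measurable \<mu>" for x unfolding f_def by (rule meas_cong[OF h(2) fx_meas])
  have "closed {x. P \<mu> x \<le> t}"
  unfolding closed_sequential_limits
  proof (intro allI impI, elim conjE)
    fix xs l assume xs: "\<forall>n. xs n \<in> {x. P \<mu> x \<le> t}" and lim: "xs \<longlonglongrightarrow> l"
    have pw: "f l y \<le> liminf (\<lambda>n. f (xs n) y)" for y
      unfolding le_Liminf_iff
    proof (intro allI impI)
      fix s assume s: "s < f l y"
      then have "s \<noteq> \<top>" by auto
      then obtain sr where sr: "s = ennreal sr" "0 \<le> sr" by (cases s) auto
      have "ereal sr < ereal B - K l y" using s sr lt_e2 unfolding f_def by simp
      then have "K l y < ereal (B - sr)" by (simp add: lt_minus)
      then have "l \<in> {x. K x y < ereal (B - sr)}" by simp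
      from topological_tendstoD[OF lim usc this]
      have "\<forall>\<^sub>F n in sequentially. K (xs n) y < ereal (B - sr)" by simp
      then show "\<forall>\<^sub>F n in sequentially. s < f (xs n) y"
      proof (rule eventually_mono)
        fix n assume "K (xs n) y < ereal (B - sr)"
        then have "ereal sr < ereal B - K (xs n) y" by (simp add: lt_minus)
        then show "s < f (xs n) y" unfolding f_def sr(1) using lt_e2[OF sr(2)] by simp
      qed
    qed
    have "P \<mu> l = (\<integral>\<^sup>+ y. f l y \<partial>\<mu>)" by (simp add: P_def f_def)
    also have "\<dots> \<le> (\<integral>\<^sup>+ y. liminf (\<lambda>n. f (xs n) y) \<partial>\<mu>)" by (intro nn_integral_mono pw)
    also have "\<dots> \<le> liminf (\<lambda>n. \<integral>\<^sup>+ y. f (xs n) y \<partial>\<mu>)" by (rule nn_integral_liminf[OF fm])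
    also have "\<dots> = liminf (\<lambda>n. P \<mu> (xs n))" by (simp add: P_def f_def)
    also have "\<dots> \<le> limsup (\<lambda>n. P \<mu> (xs n))" by (rule Liminf_le_Limsup) simp
    also have "\<dots> \<le> t" by (rule Limsup_bounded) (use xs in auto)
    finally show "l \<in> {x. P \<mu> x \<le> t}" by simp
  qed
  then have "open (- {x. P \<mu> x \<le> t})" by (rule open_Compl)
  also have "- {x. P \<mu> x \<le> t} = {x. t < P \<mu> x}" by (auto simp: not_le)
  finally show ?thesis .
qed

definition tr where "tr \<mu> g = (if g \<in> carrier G then distr \<mu> borel (\<psi> (inv\<^bsub>G\<^esub> g)) else \<mu>)"

lemma tr_bpm: assumes \<mu>: "\<mu> \<in> borel_prob_measures" shows "tr \<mu> g \<in> borel_prob_measures"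
proof (cases "g \<in> carrier G")
  case True
  interpret group G by (rule grp)
  have h: "prob_space \<mu>" "sets \<mu> = sets borel" using bpm_D \<mu> by auto
  have m: "\<psi> (inv\<^bsub>G\<^esub> g) \<in> measurable \<mu> borel"
    using True by (intro meas_cong[OF h(2)] borel_measurable_continuous_onI cpsi) simp
  show ?thesis using True prob_space.prob_space_distr[OF h(1) m]
    by (simp add: tr_def borel_prob_measures_def)
qed (simp add: tr_def \<mu>)

lemma P_tr:
  assumes \<mu>: "\<mu> \<in> borel_prob_measures" and g: "g \<in> carrier G"
  shows "P (tr \<mu> g) x = P \<mu> (\<phi> g x)"
proof -
  interpret group G by (rule grp)
  have h: "prob_space \<mu>" "sets \<mu> = sets borel" using bpm_D \<mu> by auto
  have m: "\<psi> (inv\<^bsub>G\<^esub> g) \<in> measurable \<mu> borel"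
    using g by (intro meas_cong[OF h(2)] borel_measurable_continuous_onI cpsi) simp
  have "P (tr \<mu> g) x = (\<integral>\<^sup>+ y. e2ennreal (ereal B - K x y) \<partial>distr \<mu> borel (\<psi> (inv\<^bsub>G\<^esub> g)))"
    using g by (simp add: tr_def P_def)
  also have "\<dots> = (\<integral>\<^sup>+ y. e2ennreal (ereal B - K x (\<psi> (inv\<^bsub>G\<^esub> g) y)) \<partial>\<mu>)"
    by (rule nn_integral_distr[OF m meas_cong[OF sets_distr fx_meas]])
  also have "\<dots> = P \<mu> (\<phi> g x)" unfolding P_def equiv[OF g] ..
  finally show ?thesis .
qed

definition mix where "mix \<mu> F = measure_pmf (pmf_of_set F) \<bind> tr \<mu>"

lemma tr_space: "\<mu> \<in> borel_prob_measures \<Longrightarrow> tr \<mu> g \<in> space (subprob_algebra borel)"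
  using tr_bpm[of \<mu> g] by (auto simp: space_subprob_algebra borel_prob_measures_def prob_space_imp_subprob_space)

lemma tr_meas: "\<mu> \<in> borel_prob_measures \<Longrightarrow> tr \<mu> \<in> measurable (measure_pmf p) (subprob_algebra borel)"
  using tr_space by simp

lemma mix_bpm:
  assumes \<mu>: "\<mu> \<in> borel_prob_measures" and F: "finite F" "F \<noteq> {}"
  shows "mix \<mu> F \<in> borel_prob_measures"
proof -
  have s: "sets (mix \<mu> F) = sets borel" unfolding mix_def
    by (rule sets_bind) (use tr_bpm[OF \<mu>] in \<open>auto simp: borel_prob_measures_def\<close>)
  have "prob_space (mix \<mu> F)" unfolding mix_def
    by (rule measure_pmf.prob_space_bind) (use tr_bpm[OF \<mu>] tr_meas[OF \<mu>] in \<open>auto simp: borel_prob_measures_def\<close>)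
  then show ?thesis using s by (simp add: borel_prob_measures_def)
qed

lemma P_mix:
  assumes \<mu>: "\<mu> \<in> borel_prob_measures" and F: "finite F" "F \<noteq> {}" "F \<subseteq> carrier G"
  shows "P (mix \<mu> F) x = (\<Sum>g\<in>F. P \<mu> (\<phi> g x)) / of_nat (card F)"
proof -
  have "P (mix \<mu> F) x = (\<integral>\<^sup>+ g. (\<integral>\<^sup>+ y. e2ennreal (ereal B - K x y) \<partial>tr \<mu> g) \<partial>measure_pmf (pmf_of_set F))"
    unfolding P_def mix_def by (rule nn_integral_bind[OF fx_meas tr_meas[OF \<mu>]])
  also have "\<dots> = (\<Sum>g\<in>F. P (tr \<mu> g) x) / of_nat (card F)"
    using F by (simp add: nn_integral_pmf_of_set P_def)
  also have "\<dots> = (\<Sum>g\<in>F. P \<mu> (\<phi> g x)) / of_nat (card F)"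
    using F(3) by (simp add: P_tr[OF \<mu>] subset_iff)
  finally show ?thesis .
qed


theorem main:
  assumes \<mu>0: "\<mu>0 \<in> borel_prob_measures"
  shows "((\<exists>c. \<forall>x. potential K \<mu>0 x = c) \<longleftrightarrow> (\<forall>x. potential K \<mu>0 x = kernel_const mX K))
       \<and> ((\<forall>x. potential K \<mu>0 x = kernel_const mX K) \<longleftrightarrow>
          (INF \<mu>\<in>borel_prob_measures. SUP x. potential K \<mu> x) = (SUP x. potential K \<mu>0 x))"
proof -
  define CK where "CK = ereal B - enn2ereal q"
  have kc': "kernel_const mX K = CK" using kc CK_def by simp
  have lowb: "CK \<le> (SUP x. potential K \<mu> x)" if \<mu>: "\<mu> \<in> borel_prob_measures" for \<mu>
  proof -
    obtain x :: 'x where "P \<mu> x \<le> q" using ex_le_q[OF \<mu>] by blast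
    then have "CK \<le> potential K \<mu> x" unfolding CK_def pot[OF \<mu>] by (rule h_mono)
    then show ?thesis by (rule SUP_upper2[OF UNIV_I])
  qed
  have part1: "\<forall>x. potential K \<mu>0 x = CK" if "\<exists>c. \<forall>x. potential K \<mu>0 x = c"
  proof -
    from that obtain c where c0: "\<forall>x. potential K \<mu>0 x = c" by (elim exE)
    have c: "\<And>x. potential K \<mu>0 x = c" using c0 by simp
    have "P \<mu>0 x = P \<mu>0 undefined" for x
    proof (rule h_inj)
      show "ereal B - enn2ereal (P \<mu>0 x) = ereal B - enn2ereal (P \<mu>0 undefined)"
        using c[of x] c[of undefined] unfolding pot[OF \<mu>0] by simp
    qed
    then have "P \<mu>0 undefined = q" by (rule const_q[OF \<mu>0])
    then have "P \<mu>0 x = q" for x using \<open>\<And>x. P \<mu>0 x = P \<mu>0 undefined\<close> by simp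
    then show ?thesis unfolding CK_def pot[OF \<mu>0] by simp
  qed
  have dir2a: "(INF \<mu>\<in>borel_prob_measures. SUP x. potential K \<mu> x) = (SUP x. potential K \<mu>0 x)"
    if h: "\<forall>x. potential K \<mu>0 x = CK"
  proof -
    have S: "(SUP x. potential K \<mu>0 x) = CK" using h by simp
    have "(INF \<mu>\<in>borel_prob_measures. SUP x. potential K \<mu> x) \<le> CK"
      using INF_lower[OF \<mu>0, of "\<lambda>\<mu>. SUP x. potential K \<mu> x"] S by simp
    moreover have "CK \<le> (INF \<mu>\<in>borel_prob_measures. SUP x. potential K \<mu> x)"
      by (rule INF_greatest) (rule lowb)
    ultimately show ?thesis using S by simp
  qed
  have dir2b: "\<forall>x. potential K \<mu>0 x = CK"
    if eq: "(INF \<mu>\<in>borel_prob_measures. SUP x. potential K \<mu> x) = (SUP x. potential K \<mu>0 x)"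
  proof (cases "\<forall>x. potential K \<mu>0 x = (SUP x. potential K \<mu>0 x)")
    case True
    then show ?thesis by (intro part1) blast
  next
    case False
    define U where "U x = potential K \<mu>0 x" for x
    define s where "s = (SUP x. U x)"
    obtain x1 where "U x1 \<noteq> s" using False unfolding U_def s_def by blast
    moreover have "U x1 \<le> s" unfolding s_def by (rule SUP_upper) simp
    ultimately have x1: "U x1 < s" by simp
    have sB: "s \<le> ereal B" unfolding s_def U_def pot[OF \<mu>0] by (rule SUP_least) (rule h_leB)
    have sC: "CK \<le> s" unfolding s_def U_def by (rule lowb[OF \<mu>0])
    obtain ck where ck: "CK = ereal ck" using h_fin[OF q_fin] CK_def by auto
    obtain sr where sr: "s = ereal sr" using sB sC ck by (cases s) auto
    have srB: "sr \<le> B" using sB sr by simp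
    obtain c where c: "U x1 < ereal c" "ereal c < s" using ereal_dense2[OF x1] by blast
    have csr: "c < sr" using c sr by simp
    have cB: "c \<le> B" using csr srB by simp
    define A where "A = {x. ennreal (B - c) < P \<mu>0 x}"
    have A_iff: "x \<in> A \<longleftrightarrow> U x < ereal c" for x
      unfolding A_def U_def pot[OF \<mu>0] using h_lt[OF cB] by simp
    have oA: "open A" unfolding A_def by (rule lsc[OF \<mu>0])
    have x1A: "x1 \<in> A" using A_iff c(1) by simp
    have cover: "UNIV \<subseteq> (\<Union>g\<in>carrier G. \<phi> g -` A)"
    proof
      fix x :: 'x
      obtain g where "g \<in> carrier G" "\<phi> g x = x1" using tphi by blast
      then show "x \<in> (\<Union>g\<in>carrier G. \<phi> g -` A)" using x1A by blast
    qed
    obtain F where F: "F \<subseteq> carrier G" "finite F" "UNIV \<subseteq> (\<Union>g\<in>F. \<phi> g -` A)"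
    proof (rule compactE_image[OF cX _ cover])
      show "\<And>g. g \<in> carrier G \<Longrightarrow> open (\<phi> g -` A)" by (rule open_vimage[OF oA cphi])
    qed
    have Fne: "F \<noteq> {}" using F(3) by auto
    define \<nu> where "\<nu> = mix \<mu>0 F"
    have \<nu>: "\<nu> \<in> borel_prob_measures" unfolding \<nu>_def by (rule mix_bpm[OF \<mu>0 F(2) Fne])
    define n where "n = card F"
    have n0: "0 < n" using F(2) Fne by (simp add: n_def card_gt_0_iff)
    define L where "L = B - sr"
    define M where "M = B - c"
    have L0: "0 \<le> L" using srB L_def by simp
    have LM: "L < M" using csr L_def M_def by simp
    define w where "w = (M + real (n - 1) * L) / real n"
    have w0: "0 \<le> w" unfolding w_def using L0 LM by simp
    have wL: "L < w"
    proof -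
      have "real n * L < M + real (n - 1) * L" using n0 LM by (simp add: of_nat_diff algebra_simps)
      then show ?thesis unfolding w_def using n0 by (simp add: field_simps)
    qed
    have key: "potential K \<nu> x \<le> ereal (B - w)" for x
    proof -
      obtain g0 where g0: "g0 \<in> F" "\<phi> g0 x \<in> A" using F(3) by blast
      have lb: "ennreal L \<le> P \<mu>0 (\<phi> g x)" for g
      proof -
        have "U (\<phi> g x) \<le> ereal sr" unfolding sr[symmetric] s_def by (rule SUP_upper) simp
        then show ?thesis unfolding L_def U_def pot[OF \<mu>0] by (rule h_le[OF srB])
      qed
      have lb0: "ennreal M \<le> P \<mu>0 (\<phi> g0 x)" using g0(2) unfolding A_def M_def by simp
      define h where "h g = (if g = g0 then M else L)" for g
      have "(\<Sum>g\<in>F. ennreal (h g)) \<le> (\<Sum>g\<in>F. P \<mu>0 (\<phi> g x))"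
        by (intro sum_mono) (use lb lb0 in \<open>simp add: h_def\<close>)
      moreover have "(\<Sum>g\<in>F. ennreal (h g)) = ennreal (\<Sum>g\<in>F. h g)"
        by (rule sum_ennreal) (use L0 LM in \<open>simp add: h_def\<close>)
      moreover have "(\<Sum>g\<in>F. h g) = M + real (n - 1) * L"
      proof -
        have "(\<Sum>g\<in>F. h g) = h g0 + (\<Sum>g\<in>F - {g0}. h g)" by (rule sum.remove[OF F(2) g0(1)])
        also have "(\<Sum>g\<in>F - {g0}. h g) = (\<Sum>g\<in>F - {g0}. L)" by (rule sum.cong) (auto simp: h_def)
        also have "\<dots> = real (n - 1) * L" using F(2) g0(1) by (simp add: n_def)
        finally show ?thesis by (simp add: h_def)
      qed
      ultimately have S: "ennreal (M + real (n - 1) * L) \<le> (\<Sum>g\<in>F. P \<mu>0 (\<phi> g x))" by simp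
      have nn: "0 \<le> M + real (n - 1) * L" using L0 LM by simp
      have "ennreal (M + real (n - 1) * L) / of_nat n = ennreal w"
        unfolding ennreal_of_nat_eq_real_of_nat w_def by (rule divide_ennreal[OF nn]) (use n0 in simp)
      then have "ennreal w = ennreal (M + real (n - 1) * L) / of_nat n" by simp
      also have "\<dots> \<le> (\<Sum>g\<in>F. P \<mu>0 (\<phi> g x)) / of_nat n" by (rule divide_right_mono_ennreal[OF S])
      also have "\<dots> = P \<nu> x" unfolding \<nu>_def n_def by (rule P_mix[OF \<mu>0 F(2) Fne F(1), symmetric])
      finally have "ennreal w \<le> P \<nu> x" .
      then show ?thesis unfolding pot[OF \<nu>] by (rule h_up[OF w0])
    qed
    have "s = (INF \<mu>\<in>borel_prob_measures. SUP x. potential K \<mu> x)" using eq unfolding s_def U_def by simp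
    also have "\<dots> \<le> (SUP x. potential K \<nu> x)" by (rule INF_lower[OF \<nu>])
    also have "\<dots> \<le> ereal (B - w)" by (rule SUP_least) (rule key)
    finally have "sr \<le> B - w" using sr by simp
    then show ?thesis using wL L_def by simp
  qed
  show ?thesis unfolding kc' using part1 dir2a dir2b by blast
qed

end

lemma cont_slice:
  assumes "continuous_map (prod_topology T euclidean) euclidean (\<lambda>(g, x). \<phi> g x)" "g \<in> topspace T"
  shows "continuous_on UNIV (\<phi> g)"
proof -
  have "continuous_map euclidean (prod_topology T euclidean) (\<lambda>x. (g, x))"
    using assms(2) by (simp add: continuous_map_paired)
  from continuous_map_compose[OF this assms(1)]
  have "continuous_map euclidean euclidean (\<phi> g)" by (simp add: o_def)
  then show ?thesis by (simp add: continuous_map_iff_continuous2)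
qed

theorem theorem4p7:
  fixes G :: "('g, 'b) monoid_scheme" and T :: "'g topology"
    and \<phi> :: "'g \<Rightarrow> 'x::metric_space \<Rightarrow> 'x" and \<psi> :: "'g \<Rightarrow> 'y::metric_space \<Rightarrow> 'y"
    and mX :: "'x measure" and K :: "'x \<Rightarrow> 'y \<Rightarrow> ereal" and \<mu>0 :: "'y measure"
  assumes "compact (UNIV :: 'x set)" and "compact (UNIV :: 'y set)"
    and "compact_topological_group G T"
    and "isometric_transitive_action G T \<phi>" and "isometric_transitive_action G T \<psi>"
    and "invariant_prob_measure G \<phi> mX"
    and "admissible_kernel G \<phi> \<psi> mX K"
    and "\<mu>0 \<in> borel_prob_measures"
  shows "((\<exists>c. \<forall>x. potential K \<mu>0 x = c) \<longleftrightarrow> (\<forall>x. potential K \<mu>0 x = kernel_const mX K))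
       \<and> ((\<forall>x. potential K \<mu>0 x = kernel_const mX K) \<longleftrightarrow>
          (INF \<mu>\<in>borel_prob_measures. SUP x. potential K \<mu> x) = (SUP x. potential K \<mu>0 x))"
proof -
  have ctg: "group G" "topspace T = carrier G" using assms(3) by (auto simp: compact_topological_group_def)
  have aphi: "continuous_map (prod_topology T euclidean) euclidean (\<lambda>(g, x). \<phi> g x)"
    "\<And>x x'. \<exists>g\<in>carrier G. \<phi> g x = x'"
    using assms(4) unfolding isometric_transitive_action_def by auto
  have apsi: "continuous_map (prod_topology T euclidean) euclidean (\<lambda>(g, y). \<psi> g y)"
    "\<And>y y'. \<exists>g\<in>carrier G. \<psi> g y = y'"
    using assms(5) unfolding isometric_transitive_action_def by auto
  have inv: "mX \<in> borel_prob_measures" "\<And>g A. g \<in> carrier G \<Longrightarrow> A \<in> sets mX \<Longrightarrow> emeasure mX (\<phi> g -` A) = emeasure mX A"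
    using assms(6) unfolding invariant_prob_measure_def by auto
  have ak: "(\<lambda>(x, y). K x y) \<in> borel_measurable borel" "\<exists>B::real. 0 \<le> B \<and> (\<forall>x y. K x y \<le> ereal B)"
    "\<And>y. (\<integral>\<^sup>+ x. e2ennreal \<bar>K x y\<bar> \<partial>mX) < \<infinity>" "\<And>y t. open {x. K x y < t}"
    "\<And>g x y. g \<in> carrier G \<Longrightarrow> K (\<phi> g x) y = K x (\<psi> (inv\<^bsub>G\<^esub> g) y)"
    using assms(7) unfolding admissible_kernel_def by auto
  from ak(2) obtain B :: real where B: "0 \<le> B" "\<forall>x y. K x y \<le> ereal B" by (elim exE conjE)
  have "setting G \<phi> \<psi> mX K B"
  proof (rule setting.intro)
    show "compact (UNIV :: 'x set)" by (rule assms(1))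
    show "compact (UNIV :: 'y set)" by (rule assms(2))
    show "group G" by (rule ctg(1))
    show "\<And>g. g \<in> carrier G \<Longrightarrow> continuous_on UNIV (\<phi> g)"
      using cont_slice[OF aphi(1)] ctg(2) by simp
    show "\<And>g. g \<in> carrier G \<Longrightarrow> continuous_on UNIV (\<psi> g)"
      using cont_slice[OF apsi(1)] ctg(2) by simp
    show "\<And>x x'. \<exists>g\<in>carrier G. \<phi> g x = x'" by (rule aphi(2))
    show "\<And>y y'. \<exists>g\<in>carrier G. \<psi> g y = y'" by (rule apsi(2))
    show "mX \<in> borel_prob_measures" by (rule inv(1))
    show "\<And>g A. g \<in> carrier G \<Longrightarrow> A \<in> sets mX \<Longrightarrow> emeasure mX (\<phi> g -` A) = emeasure mX A" by (rule inv(2))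
    show "(\<lambda>(x, y). K x y) \<in> borel_measurable borel" by (rule ak(1))
    show "0 \<le> B" by (rule B(1))
    show "\<And>x y. K x y \<le> ereal B" using B(2) by simp
    show "\<And>y. (\<integral>\<^sup>+ x. e2ennreal \<bar>K x y\<bar> \<partial>mX) < \<infinity>" by (rule ak(3))
    show "\<And>y t. open {x. K x y < t}" by (rule ak(4))
    show "\<And>g x y. g \<in> carrier G \<Longrightarrow> K (\<phi> g x) y = K x (\<psi> (inv\<^bsub>G\<^esub> g) y)" by (rule ak(5))
  qed
  then show ?thesis by (rule setting.main[OF _ assms(8)])
qed

end
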